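(* Let $w=(1+\sqrt{-3})/2$. Suppose that every Eisenstein integer $a+bw$ with integers $a>3$, $b>3$ can be written as $p+q$ with $p,q$ Eisenstein primes lying in $Q=\{x+yw : x,y\in\mathbb{Z},\ x>0,\ y>0\}$. Then there are infinitely many positive integers $n$ such that $n^2+n+1$ is a rational prime.
   Context: Here $w=(1+\sqrt{-3})/2$ (a primitive sixth root of unity, $w^3=-1$). Eisenstein integers are the elements $a+bw$ with $a,b\in\mathbb{Z}$, forming the ring $\mathbb{Z}[w]$, with norm $N(a+bw)=|a+bw|^2=a^2+ab+b^2$. An Eisenstein prime is an irreducible (equivalently, prime) element of $\mathbb{Z}[w]$. $Q$ denotes the set of Eisenstein integers $a+bw$ with $a>0$ and $b>0$. *)

theory Defs
  imports Complex_Main "HOL-Computational_Algebra.Primes"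
begin

definition eis_w :: complex where
  "eis_w = Complex (1/2) (sqrt 3 / 2)"

definition eis :: "int \<Rightarrow> int \<Rightarrow> complex" where
  "eis a b = of_int a + of_int b * eis_w"

definition Eis :: "complex set" where
  "Eis = {eis a b | a b. True}"

definition eis_unit :: "complex \<Rightarrow> bool" where
  "eis_unit x \<longleftrightarrow> x \<in> Eis \<and> (\<exists>y\<in>Eis. x * y = 1)"

text \<open>Eisenstein prime = irreducible element of Z[w] (the library notion of
  irreducibility, relativised to the subring Z[w]).\<close>
definition eis_prime :: "complex \<Rightarrow> bool" where
  "eis_prime p \<longleftrightarrow> p \<in> Eis \<and> p \<noteq> 0 \<and> \<not> eis_unit p \<and>
     (\<forall>y\<in>Eis. \<forall>z\<in>Eis. p = y * z \<longrightarrow> eis_unit y \<or> eis_unit z)"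

definition eis_Q :: "complex set" where
  "eis_Q = {eis x y | x y. x > 0 \<and> y > 0}"

end

theory Submission
  imports Defs "HOL-Library.Discrete_Functions"
begin

lemma sqrt3_sq: "sqrt 3 * sqrt 3 = (3::real)" by simp

lemma eis_w_sq: "eis_w * eis_w = eis_w - 1"
  by (simp add: eis_w_def complex_eq_iff sqrt3_sq)

lemma eis_mult: "eis a b * eis c d = eis (a*c - b*d) (a*d + b*c + b*d)"
proof -
  have "eis a b * eis c d = of_int (a*c) + of_int (a*d + b*c) * eis_w + of_int (b*d) * (eis_w * eis_w)"
    by (simp add: eis_def algebra_simps)
  also have "\<dots> = eis (a*c - b*d) (a*d + b*c + b*d)"
    by (simp add: eis_w_sq eis_def algebra_simps)
  finally show ?thesis .
qed

lemma eis_add: "eis a b + eis c d = eis (a+c) (b+d)"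
  by (simp add: eis_def algebra_simps)

lemma eis_one: "1 = eis 1 0" by (simp add: eis_def)

lemma eis_inj: "eis a b = eis c d \<longleftrightarrow> a = c \<and> b = d"
proof
  assume h: "eis a b = eis c d"
  have "Im (eis a b) = Im (eis c d)" using h by simp
  hence "b = d" by (simp add: eis_def eis_w_def)
  moreover have "Re (eis a b) = Re (eis c d)" using h by simp
  ultimately show "a = c \<and> b = d" by (simp add: eis_def eis_w_def)
qed simp

lemma norm_mult: "(a*c - b*d)^2 + (a*c - b*d)*(a*d + b*c + b*d) + (a*d + b*c + b*d)^2
   = (a^2+a*b+b^2) * (c^2+c*d+(d::int)^2)"
  by (simp add: algebra_simps power2_eq_square)

lemma norm_nonneg: "0 \<le> a^2+a*b+(b::int)^2"
proof -
  have "0 \<le> (2*a+b)^2 + 3*b^2" by simp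
  also have "\<dots> = 4*(a^2+a*b+b^2)" by (simp add: algebra_simps power2_eq_square)
  finally show ?thesis by simp
qed

lemma unit_norm:
  assumes "eis_unit (eis a b)" shows "a^2+a*b+b^2 = 1"
proof -
  obtain y where y: "y \<in> Eis" "eis a b * y = 1" using assms unfolding eis_unit_def by blast
  then obtain c d where yd: "y = eis c d" unfolding Eis_def by blast
  have "eis (a*c - b*d) (a*d + b*c + b*d) = eis 1 0" using y yd eis_mult eis_one by simp
  hence "a*c - b*d = 1" "a*d + b*c + b*d = 0" using eis_inj by blast+
  hence "(a^2+a*b+b^2) * (c^2+c*d+d^2) = 1" using norm_mult[of a c b d] by simp
  thus ?thesis using norm_nonneg[of a b] norm_nonneg[of c d] pos_zmult_eq_1_iff
    by (metis less_le mult_not_zero zero_neq_one)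
qed

lemma not_eis_prime:
  assumes "A = c*e - d*f" "B = c*f + d*e + d*f" "c^2+c*d+d^2 \<noteq> 1" "e^2+e*f+f^2 \<noteq> 1"
  shows "\<not> eis_prime (eis A B)"
proof
  assume h: "eis_prime (eis A B)"
  have "eis A B = eis c d * eis e f" using assms eis_mult by simp
  moreover have "eis c d \<in> Eis" "eis e f \<in> Eis" unfolding Eis_def by blast+
  ultimately have "eis_unit (eis c d) \<or> eis_unit (eis e f)" using h unfolding eis_prime_def by blast
  thus False using unit_norm assms by blast
qed

lemma prime_not_square:
  assumes "prime (q::nat)" shows "s^2 \<noteq> q"
proof
  assume "s^2 = q"
  hence "prime (s*s)" using assms by (simp add: power2_eq_square)
  hence "s = 1" using prime_product by blast
  thus False using \<open>s^2 = q\<close> assms by (metis not_prime_1 power_one)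
qed

lemma even_norm:
  assumes "even (a^2+a*b+(b::int)^2)" shows "even a \<and> even b"
  using assms by (cases "even a"; cases "even b") (auto simp: even_add even_mult_iff)

lemma thue:
  fixes x :: int and q :: nat
  assumes q: "prime q" and dv: "int q dvd x^2+x+1"
  shows "\<exists>a b. a^2+a*b+b^2 = int q \<and> int q dvd a - b*x"
proof -
  define s where "s = floor_sqrt q"
  have s1: "s^2 \<le> q" "q < (Suc s)^2" unfolding s_def using Suc_floor_sqrt_power2_gt by auto
  have s2: "s^2 < q" using s1 prime_not_square[OF q, of s] by linarith
  define A where "A = {0..s} \<times> {0..s}"
  define g where "g = (\<lambda>(u::nat,v::nat). (int u - int v * x) mod int q)"
  have qpos: "0 < int q" using q prime_gt_0_nat by simp
  have img: "g ` A \<subseteq> {0..<int q}" unfolding g_def using qpos by auto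
  have cA: "card A = (Suc s)^2" unfolding A_def by (simp add: power2_eq_square)
  have "\<not> inj_on g A"
  proof
    assume "inj_on g A"
    hence "card A \<le> card {0..<int q}" using card_inj_on_le img by blast
    thus False using cA s1 by simp
  qed
  then obtain p1 p2 where p: "p1 \<in> A" "p2 \<in> A" "p1 \<noteq> p2" "g p1 = g p2"
    unfolding inj_on_def by blast
  obtain u1 v1 u2 v2 where uv: "p1 = (u1,v1)" "p2 = (u2,v2)" by (cases p1, cases p2)
  define a where "a = int u1 - int u2"
  define b where "b = int v1 - int v2"
  have ab0: "a \<noteq> 0 \<or> b \<noteq> 0" using p uv a_def b_def by auto
  have as: "\<bar>a\<bar> \<le> int s" "\<bar>b\<bar> \<le> int s" using p uv a_def b_def A_def by auto
  have "int q dvd (int u1 - int v1 * x) - (int u2 - int v2 * x)"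
    using p(4) uv unfolding g_def by (simp add: mod_eq_dvd_iff)
  hence dab: "int q dvd a - b*x" unfolding a_def b_def by (simp add: algebra_simps)
  define N where "N = a^2+a*b+b^2"
  have Neq: "N = (a - b*x)*(a + b*x + b) + b^2*(x^2+x+1)"
    unfolding N_def by (simp add: algebra_simps power2_eq_square)
  have qN: "int q dvd N" unfolding Neq using dab dv by simp
  have "4*N = (2*a+b)^2 + 3*b^2" unfolding N_def by (simp add: algebra_simps power2_eq_square)
  moreover have "(2*a+b)^2 + 3*b^2 > 0"
  proof (cases "b = 0")
    case False hence "b^2 > 0" by simp
    thus ?thesis by (smt (verit) zero_le_power2)
  qed (use ab0 in simp)
  ultimately have Npos: "N > 0" by linarith
  have "a^2 \<le> (int s)^2" "b^2 \<le> (int s)^2" using as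
    by (metis abs_ge_zero power2_abs power_mono)+
  moreover have "a*b \<le> (int s)^2"
  proof -
    have "a*b \<le> \<bar>a\<bar>*\<bar>b\<bar>" by (simp add: abs_mult[symmetric])
    also have "\<dots> \<le> int s * int s" using as by (simp add: mult_mono)
    finally show ?thesis by (simp add: power2_eq_square)
  qed
  ultimately have "N \<le> 3 * (int s)^2" unfolding N_def by linarith
  moreover have "(int s)^2 < int q" using s2 by (metis of_nat_less_iff of_nat_power)
  ultimately have N3: "N < 3 * int q" by linarith
  obtain k where k: "N = int q * k" using qN by blast
  have "k > 0" using k Npos qpos by (simp add: zero_less_mult_iff)
  moreover have "k < 3" using k N3 qpos by (metis mult.commute mult_less_cancel_left_pos)
  ultimately have "k = 1 \<or> k = 2" by linarith
  moreover have "k \<noteq> 2"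
  proof
    assume "k = 2"
    hence "even N" using k by simp
    hence "even a \<and> even b" using even_norm unfolding N_def by blast
    then obtain a' b' where "a = 2*a'" "b = 2*b'" by blast
    hence "N = 4*(a'^2+a'*b'+b'^2)" unfolding N_def by (simp add: algebra_simps power2_eq_square)
    hence "4 dvd 2 * int q" using k \<open>k = 2\<close> by (metis dvd_triv_left mult.commute)
    hence "2 dvd int q" by presburger
    hence "2 dvd q" by presburger
    hence "q = 2" using primes_dvd_imp_eq[OF two_is_prime_nat q] by simp
    hence "2 dvd x^2+x+1" using dv by simp
    moreover have "even (x^2+x)" by (simp add: power2_eq_square)
    ultimately show False by presburger
  qed
  ultimately have "N = int q" using k by auto
  thus ?thesis using dab unfolding N_def by blast
qed

lemma L:
  fixes x :: nat
  assumes x: "x \<ge> 1" and ep: "eis_prime (eis (int x) 1)"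
  shows "prime (x^2+x+1)"
proof (rule ccontr)
  assume np: "\<not> prime (x^2+x+1)"
  have "x^2+x+1 \<noteq> 1" using x by simp
  then obtain q where q: "prime q" "q dvd x^2+x+1" using prime_factor_nat by blast
  have qne: "q \<noteq> x^2+x+1" using q np by auto
  have "int q dvd int (x^2+x+1)" using q by (simp only: of_nat_dvd_iff)
  hence dv: "int q dvd (int x)^2 + int x + 1" by (simp add: ac_simps)
  obtain a b where ab: "a^2+a*b+b^2 = int q" "int q dvd a - b*int x" using thue[OF q(1) dv] by blast
  have "int q dvd int x * (a+b) + b"
  proof -
    have "int x * (a+b) + b = (a - b*int x) * int x + b*((int x)^2 + int x + 1)"
      by (simp add: algebra_simps power2_eq_square)
    thus ?thesis using ab(2) dv by simp
  qed
  then obtain c where hc: "int x * (a+b) + b = int q * c" by blast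
  obtain d where hd: "a - b*int x = int q * d" using ab(2) by blast
  have qnz: "int q \<noteq> 0" using q(1) by (simp add: prime_gt_0_nat)
  have "int q * (a*c - b*d) = int q * int x"
  proof -
    have "int q * (a*c - b*d) = a*(int q*c) - b*(int q*d)" by (simp add: algebra_simps)
    also have "\<dots> = a*(int x * (a+b) + b) - b*(a - b*int x)" by (simp only: hc hd)
    also have "\<dots> = int x * (a^2+a*b+b^2)" by (simp add: algebra_simps power2_eq_square)
    finally show ?thesis using ab(1) by simp
  qed
  hence e1: "int x = a*c - b*d" using qnz by simp
  have "int q * (a*d + b*c + b*d) = int q * 1"
  proof -
    have "int q * (a*d + b*c + b*d) = a*(int q*d) + b*(int q*c) + b*(int q*d)" by (simp add: algebra_simps)
    also have "\<dots> = a*(a - b*int x) + b*(int x * (a+b) + b) + b*(a - b*int x)" by (simp only: hc hd)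
    also have "\<dots> = a^2+a*b+b^2" by (simp add: algebra_simps power2_eq_square)
    finally show ?thesis using ab(1) by simp
  qed
  hence e2: "1 = a*d + b*c + b*d" using qnz by simp
  have "q \<noteq> 1" using q(1) by auto
  hence n1: "a^2+a*b+b^2 \<noteq> 1" using ab(1) by simp
  have "c^2+c*d+d^2 \<noteq> 1"
  proof
    assume "c^2+c*d+d^2 = 1"
    hence "(int x)^2 + int x * 1 + 1^2 = int q" using norm_mult[of a c b d] e1 e2 ab(1) by simp
    hence "int (x^2+x+1) = int q" by simp
    thus False using qne by linarith
  qed
  thus False using not_eis_prime[OF e1 e2 n1] ep by blast
qed


lemma K:
  fixes j A :: int
  assumes j: "1 \<le> j" "2*j \<le> A" and dv: "(j^2-3*j+9) dvd A"
  shows "\<not> eis_prime (eis (A - j) 3)"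
proof -
  obtain k where k: "A = (j^2-3*j+9)*k" using dv by blast
  have e1: "A - j = (-j)*(1+(3-j)*k) - 3*(-3*k)" using k by (simp add: algebra_simps power2_eq_square)
  have e2: "3 = (-j)*(-3*k) + 3*(1+(3-j)*k) + 3*(-3*k)" by (simp add: algebra_simps)
  have n1: "(-j)^2 + (-j)*3 + 3^2 \<noteq> 1"
  proof
    assume "(-j)^2 + (-j)*3 + 3^2 = 1"
    hence "(2*j-3)^2 + 23 = 0" by (simp add: algebra_simps power2_eq_square)
    thus False by (smt (verit) zero_le_power2)
  qed
  have n2: "(1+(3-j)*k)^2 + (1+(3-j)*k)*(-3*k) + (-3*k)^2 \<noteq> 1"
  proof
    assume h: "(1+(3-j)*k)^2 + (1+(3-j)*k)*(-3*k) + (-3*k)^2 = 1"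
    have "(A-j)^2 + (A-j)*3 + 3^2 = ((-j)^2 + (-j)*3 + 3^2) * ((1+(3-j)*k)^2 + (1+(3-j)*k)*(-3*k) + (-3*k)^2)"
      by (rule norm_mult[of "-j" "1+(3-j)*k" 3 "-3*k", folded e1 e2])
    hence "(A-j)^2 + (A-j)*3 = j^2 - 3*j" using h by simp
    moreover have "(A-j)^2 \<ge> j^2" using j by (simp add: power_mono)
    moreover have "(A-j)*3 \<ge> 3" using j by presburger
    ultimately show False using j by linarith
  qed
  show ?thesis by (rule not_eis_prime[OF e1 e2 n1 n2])
qed

lemma two_not_prime:
  fixes k :: int assumes "k \<ge> 1" shows "\<not> eis_prime (eis (2*k) 2)"
proof -
  have "k*k > 0" using assms by simp
  hence "k*k + k \<noteq> 0" using assms by linarith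
  hence n: "k^2 + k*1 + 1^2 \<noteq> 1" using assms by (simp add: power2_eq_square)
  show ?thesis by (rule not_eis_prime[where c=2 and d=0 and e=k and f=1]) (use n in auto)
qed

lemma Q_elim: "p \<in> eis_Q \<Longrightarrow> \<exists>x y. p = eis x y \<and> x > 0 \<and> y > 0"
  unfolding eis_Q_def by blast

lemma odd_factor: "odd ((int j)^2 - 3*int j + 9)"
proof -
  have "even ((int j)^2 - 3*int j)" by (cases "even j") (auto simp: power2_eq_square)
  thus ?thesis by simp
qed

lemma y1_case:
  fixes M :: nat and A x1 :: int
  assumes S: "\<forall>n. n > 0 \<and> prime (n^2+n+1) \<longrightarrow> n \<le> M"
    and dvA: "\<forall>j\<in>{1..M}. ((int j)^2 - 3*int j + 9) dvd A"
    and A: "A \<ge> 2 * int M"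
    and x1: "x1 > 0" and p1: "eis_prime (eis x1 1)" and p2: "eis_prime (eis (A - x1) 3)"
  shows False
proof -
  define n where "n = nat x1"
  have xn: "x1 = int n" using x1 n_def by simp
  have "prime (n^2+n+1)" using L[of n] p1 xn x1 by simp
  hence nM: "n \<le> M" using S xn x1 by simp
  have "n \<ge> 1" using xn x1 by simp
  hence "((int n)^2 - 3*int n + 9) dvd A" using dvA nM by simp
  hence "\<not> eis_prime (eis (A - int n) 3)" using K[of "int n" A] A nM \<open>n \<ge> 1\<close> by simp
  thus False using p2 xn by simp
qed

theorem mainTheorem2:
  assumes "\<forall>a b :: int. a > 3 \<and> b > 3 \<longrightarrow>
             (\<exists>p q. eis_prime p \<and> eis_prime q \<and> p \<in> eis_Q \<and> q \<in> eis_Q \<and> eis a b = p + q)"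
  shows "infinite {n :: nat. n > 0 \<and> prime (n^2 + n + 1)}"
proof
  assume fin: "finite {n :: nat. n > 0 \<and> prime (n^2 + n + 1)}"
  then obtain M where M: "\<forall>n\<in>{n :: nat. n > 0 \<and> prime (n^2 + n + 1)}. n \<le> M"
    using finite_nat_set_iff_bounded_le by blast
  hence S: "\<forall>n. n > 0 \<and> prime (n^2+n+1) \<longrightarrow> n \<le> M" by blast
  define P where "P = (\<Prod>j\<in>{1..M}. (int j)^2 - 3*int j + 9)"
  define A where "A = P * (2 * int M + 5)"
  have fpos: "\<And>j::nat. (int j)^2 - 3*int j + 9 > 0"
  proof -
    fix j :: nat
    have "4*((int j)^2 - 3*int j + 9) = (2*int j - 3)^2 + 27" by (simp add: algebra_simps power2_eq_square)
    thus "(int j)^2 - 3*int j + 9 > 0" by (smt (verit) zero_le_power2)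
  qed
  have Ppos: "P > 0" unfolding P_def using fpos by (simp add: prod_pos)
  have Podd: "odd P" unfolding P_def using odd_factor by (simp add: even_prod_iff)
  have Aodd: "odd A" unfolding A_def using Podd by simp
  have A2: "A \<ge> 2 * int M + 5"
  proof -
    have "1 * (2 * int M + 5) \<le> P * (2 * int M + 5)" using Ppos by (intro mult_right_mono) auto
    thus ?thesis unfolding A_def by simp
  qed
  have dvA: "\<forall>j\<in>{1..M}. ((int j)^2 - 3*int j + 9) dvd A"
    unfolding A_def P_def by (auto intro: dvd_mult2 dvd_prodI)
  obtain p q where pq: "eis_prime p" "eis_prime q" "p \<in> eis_Q" "q \<in> eis_Q" "eis A 4 = p + q"
    using assms[rule_format, of A 4] A2 by auto
  obtain x1 y1 where 1: "p = eis x1 y1" "x1 > 0" "y1 > 0" using Q_elim pq(3) by blast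
  obtain x2 y2 where 2: "q = eis x2 y2" "x2 > 0" "y2 > 0" using Q_elim pq(4) by blast
  have "eis A 4 = eis (x1+x2) (y1+y2)" using pq(5) 1 2 eis_add by simp
  hence s: "A = x1 + x2" "4 = y1 + y2" using eis_inj by blast+
  have Ages: "A \<ge> 2 * int M" using A2 by simp
  have "y1 = 1 \<or> y1 = 2 \<or> y1 = 3" using s 1 2 by linarith
  moreover
  { assume "y1 = 1"
    hence "y2 = 3" using s by simp
    have "x2 = A - x1" using s by simp
    hence False using y1_case[OF S dvA Ages 1(2)] pq 1 2 \<open>y1 = 1\<close> \<open>y2 = 3\<close> by simp }
  moreover
  { assume "y1 = 3"
    hence "y2 = 1" using s by simp
    have "x1 = A - x2" using s by simp
    hence False using y1_case[OF S dvA Ages 2(2)] pq 1 2 \<open>y1 = 3\<close> \<open>y2 = 1\<close> by simp }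
  moreover
  { assume "y1 = 2"
    hence "y2 = 2" using s by simp
    have "even x1 \<or> even x2" using Aodd s by auto
    moreover
    { assume "even x1" then obtain k where "x1 = 2*k" by blast
      hence "\<not> eis_prime p" using two_not_prime[of k] 1 \<open>y1 = 2\<close> by simp
      hence False using pq by simp }
    moreover
    { assume "even x2" then obtain k where "x2 = 2*k" by blast
      hence "\<not> eis_prime q" using two_not_prime[of k] 2 \<open>y2 = 2\<close> by simp
      hence False using pq by simp }
    ultimately have False by blast }
  ultimately show False by blast
qed

end
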